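(* Let $X$ be a rearrangement invariant sequence space such that the discrete Cesàro operator $C$ is bounded on $X$. Then $(CX)_a=C(X_a)$.
   Context: A rearrangement invariant sequence space is a Banach space $X$ of real sequences with the ideal property ($|x|\le|y|$ coordinatewise, $y\in X$ imply $x\in X$, $\|x\|_X\le\|y\|_X$), containing a sequence with all coordinates nonzero, with equal norms for equimeasurable sequences. $C(x)_n=\frac1n\sum_{k=1}^nx_k$. $CX=\{x:C(|x|)\in X\}$ with $\|x\|_{CX}=\|C(|x|)\|_X$, and $C(X_a)=\{x: C(|x|)\in X_a\}$. For a Banach ideal space $Y$, $Y_a$ denotes the ideal of order continuous elements: $y\in Y_a$ iff $0\le y^{(n)}\le|y|$, $y^{(n)}\downarrow0$ coordinatewise imply $\|y^{(n)}\|_Y\to0$. *)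

theory Defs
  imports "HOL-Analysis.Analysis" "HOL-Library.Extended_Nat"
begin

text \<open>Sequences are functions nat \<Rightarrow> real (index 0 corresponds to the paper's index 1).
A sequence space is a pair of a carrier set and a norm function on it.\<close>

definition cesaro :: "(nat \<Rightarrow> real) \<Rightarrow> nat \<Rightarrow> real" where
  "cesaro x n = (\<Sum>k\<le>n. x k) / real (Suc n)"

definition absseq :: "(nat \<Rightarrow> real) \<Rightarrow> nat \<Rightarrow> real" where
  "absseq x = (\<lambda>k. \<bar>x k\<bar>)"

definition banach_ideal_space :: "(nat \<Rightarrow> real) set \<Rightarrow> ((nat \<Rightarrow> real) \<Rightarrow> real) \<Rightarrow> bool" where
  "banach_ideal_space X N \<longleftrightarrow>
     (\<lambda>_. 0) \<in> X \<and>
     (\<forall>x\<in>X. \<forall>y\<in>X. (\<lambda>k. x k + y k) \<in> X) \<and>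
     (\<forall>x\<in>X. \<forall>c::real. (\<lambda>k. c * x k) \<in> X) \<and>
     (\<forall>x\<in>X. N x \<ge> 0 \<and> (N x = 0 \<longleftrightarrow> x = (\<lambda>_. 0))) \<and>
     (\<forall>x\<in>X. \<forall>c::real. N (\<lambda>k. c * x k) = \<bar>c\<bar> * N x) \<and>
     (\<forall>x\<in>X. \<forall>y\<in>X. N (\<lambda>k. x k + y k) \<le> N x + N y) \<and>
     (\<forall>u :: nat \<Rightarrow> nat \<Rightarrow> real. (\<forall>n. u n \<in> X) \<longrightarrow>
        (\<forall>e>0. \<exists>M. \<forall>m\<ge>M. \<forall>n\<ge>M. N (\<lambda>k. u m k - u n k) < e) \<longrightarrow>
        (\<exists>x\<in>X. (\<lambda>n. N (\<lambda>k. u n k - x k)) \<longlonglongrightarrow> 0)) \<and>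
     (\<forall>x y. y \<in> X \<longrightarrow> (\<forall>k. \<bar>x k\<bar> \<le> \<bar>y k\<bar>) \<longrightarrow> x \<in> X \<and> N x \<le> N y)"

definition distrib :: "(nat \<Rightarrow> real) \<Rightarrow> real \<Rightarrow> enat" where
  "distrib x t = (if finite {k. \<bar>x k\<bar> > t} then enat (card {k. \<bar>x k\<bar> > t}) else \<infinity>)"

definition equimeasurable :: "(nat \<Rightarrow> real) \<Rightarrow> (nat \<Rightarrow> real) \<Rightarrow> bool" where
  "equimeasurable x y \<longleftrightarrow> (\<forall>t>0. distrib x t = distrib y t)"

definition ri_sequence_space :: "(nat \<Rightarrow> real) set \<Rightarrow> ((nat \<Rightarrow> real) \<Rightarrow> real) \<Rightarrow> bool" where
  "ri_sequence_space X N \<longleftrightarrow>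
     banach_ideal_space X N \<and>
     (\<exists>x\<in>X. \<forall>k. x k \<noteq> 0) \<and>
     (\<forall>x y. x \<in> X \<longrightarrow> equimeasurable x y \<longrightarrow> y \<in> X \<and> N y = N x)"

definition cesaro_bounded :: "(nat \<Rightarrow> real) set \<Rightarrow> ((nat \<Rightarrow> real) \<Rightarrow> real) \<Rightarrow> bool" where
  "cesaro_bounded X N \<longleftrightarrow> (\<exists>M. \<forall>x\<in>X. cesaro x \<in> X \<and> N (cesaro x) \<le> M * N x)"

definition ces_space :: "(nat \<Rightarrow> real) set \<Rightarrow> (nat \<Rightarrow> real) set" where
  "ces_space X = {x. cesaro (absseq x) \<in> X}"

definition ces_norm :: "((nat \<Rightarrow> real) \<Rightarrow> real) \<Rightarrow> (nat \<Rightarrow> real) \<Rightarrow> real" where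
  "ces_norm N x = N (cesaro (absseq x))"

definition ord_cont :: "(nat \<Rightarrow> real) set \<Rightarrow> ((nat \<Rightarrow> real) \<Rightarrow> real) \<Rightarrow> (nat \<Rightarrow> real) set" where
  "ord_cont Y NY = {y \<in> Y. \<forall>u :: nat \<Rightarrow> nat \<Rightarrow> real.
      (\<forall>n k. 0 \<le> u n k \<and> u n k \<le> \<bar>y k\<bar>) \<longrightarrow>
      (\<forall>k. antimono (\<lambda>n. u n k) \<and> (\<lambda>n. u n k) \<longlonglongrightarrow> 0) \<longrightarrow>
      (\<lambda>n. NY (u n)) \<longlonglongrightarrow> 0}"

end

theory Submission
  imports Defs
begin

lemma bis_ideal:
  assumes "banach_ideal_space X N" "y \<in> X" "\<And>k. \<bar>x k\<bar> \<le> \<bar>y k\<bar>"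
  shows "x \<in> X" "N x \<le> N y"
  using assms unfolding banach_ideal_space_def by blast+

lemma bis_add:
  assumes "banach_ideal_space X N" "x \<in> X" "y \<in> X"
  shows "(\<lambda>k. x k + y k) \<in> X" "N (\<lambda>k. x k + y k) \<le> N x + N y"
  using assms unfolding banach_ideal_space_def by blast+

lemma bis_scale:
  assumes "banach_ideal_space X N" "x \<in> X"
  shows "(\<lambda>k. c * x k) \<in> X" "N (\<lambda>k. c * x k) = \<bar>c\<bar> * N x"
  using assms unfolding banach_ideal_space_def by blast+

lemma bis_nonneg:
  assumes "banach_ideal_space X N" "x \<in> X"
  shows "N x \<ge> 0"
  using assms unfolding banach_ideal_space_def by blast

lemma cesaro_nonneg: "(\<And>k. x k \<ge> 0) \<Longrightarrow> cesaro x n \<ge> 0"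
  unfolding cesaro_def by (simp add: sum_nonneg)

lemma absseq_nonneg: "absseq x = x" if "\<And>k. x k \<ge> 0"
  using that unfolding absseq_def by (simp add: abs_of_nonneg)

theorem proposition5p1:
  fixes X :: "(nat \<Rightarrow> real) set" and N :: "(nat \<Rightarrow> real) \<Rightarrow> real"
  assumes "ri_sequence_space X N"
    and "cesaro_bounded X N"
  shows "ord_cont (ces_space X) (ces_norm N) = {x. cesaro (absseq x) \<in> ord_cont X N}"
proof
  have B: "banach_ideal_space X N" using assms(1) unfolding ri_sequence_space_def by blast
  show "{x. cesaro (absseq x) \<in> ord_cont X N} \<subseteq> ord_cont (ces_space X) (ces_norm N)"
  proof
    fix x assume "x \<in> {x. cesaro (absseq x) \<in> ord_cont X N}"
    then have xX: "cesaro (absseq x) \<in> X" and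
      oc: "\<And>u. (\<forall>n k. 0 \<le> u n k \<and> u n k \<le> \<bar>cesaro (absseq x) k\<bar>) \<Longrightarrow>
      (\<forall>k. antimono (\<lambda>n. u n k) \<and> (\<lambda>n. u n k) \<longlonglongrightarrow> 0) \<Longrightarrow>
      (\<lambda>n. N (u n)) \<longlonglongrightarrow> 0"
      unfolding ord_cont_def by auto
    show "x \<in> ord_cont (ces_space X) (ces_norm N)"
      unfolding ord_cont_def
    proof (intro CollectI conjI allI impI)
      show "x \<in> ces_space X" using xX unfolding ces_space_def by simp
      fix u :: "nat \<Rightarrow> nat \<Rightarrow> real"
      assume u1: "\<forall>n k. 0 \<le> u n k \<and> u n k \<le> \<bar>x k\<bar>"
        and u2: "\<forall>k. antimono (\<lambda>n. u n k) \<and> (\<lambda>n. u n k) \<longlonglongrightarrow> 0"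
      have ab: "absseq (u n) = u n" for n by (rule absseq_nonneg) (use u1 in auto)
      have c1: "0 \<le> cesaro (u n) k \<and> cesaro (u n) k \<le> \<bar>cesaro (absseq x) k\<bar>" for n k
      proof -
        have "0 \<le> cesaro (u n) k" by (rule cesaro_nonneg) (use u1 in auto)
        moreover have "cesaro (u n) k \<le> cesaro (absseq x) k"
          unfolding cesaro_def absseq_def
          by (intro divide_right_mono sum_mono) (use u1 in auto)
        ultimately show ?thesis by simp
      qed
      have c2: "antimono (\<lambda>n. cesaro (u n) k)" for k
      proof (rule antimonoI)
        fix n n' :: nat assume "n \<le> n'"
        then have "u n' j \<le> u n j" for j using u2 antimonoD by blast
        then show "cesaro (u n') k \<le> cesaro (u n) k"
          unfolding cesaro_def by (intro divide_right_mono sum_mono) auto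
      qed
      have c3: "(\<lambda>n. cesaro (u n) k) \<longlonglongrightarrow> 0" for k
      proof -
        have "(\<lambda>n. (\<Sum>j\<le>k. u n j) / real (Suc k)) \<longlonglongrightarrow> (\<Sum>j\<le>k. 0) / real (Suc k)"
          by (intro tendsto_divide tendsto_sum tendsto_const) (use u2 in auto)
        then show ?thesis unfolding cesaro_def by simp
      qed
      have "(\<lambda>n. N (cesaro (u n))) \<longlonglongrightarrow> 0"
        using oc[of "\<lambda>n. cesaro (u n)"] c1 c2 c3 by blast
      then show "(\<lambda>n. ces_norm N (u n)) \<longlonglongrightarrow> 0" unfolding ces_norm_def ab .
    qed
  qed
  show "ord_cont (ces_space X) (ces_norm N) \<subseteq> {x. cesaro (absseq x) \<in> ord_cont X N}"
  proof
    fix x assume xa: "x \<in> ord_cont (ces_space X) (ces_norm N)"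
    define y where "y = absseq x"
    have xX: "cesaro y \<in> X" using xa unfolding ord_cont_def ces_space_def y_def by auto
    have ocx: "\<And>u. (\<forall>n k. 0 \<le> u n k \<and> u n k \<le> \<bar>x k\<bar>) \<Longrightarrow>
      (\<forall>k. antimono (\<lambda>n. u n k) \<and> (\<lambda>n. u n k) \<longlonglongrightarrow> 0) \<Longrightarrow>
      (\<lambda>n. ces_norm N (u n)) \<longlonglongrightarrow> 0"
      using xa unfolding ord_cont_def by blast
    obtain M where M: "\<forall>z\<in>X. cesaro z \<in> X \<and> N (cesaro z) \<le> M * N z"
      using assms(2) unfolding cesaro_bounded_def by blast
    obtain z where zX: "z \<in> X" and z0: "\<forall>k. z k \<noteq> 0"
      using assms(1) unfolding ri_sequence_space_def by blast
    define e0 :: "nat \<Rightarrow> real" where "e0 = (\<lambda>k. if k = 0 then 1 else 0)"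
    have e0X: "e0 \<in> X"
    proof (rule bis_ideal(1)[OF B bis_scale(1)[OF B zX, of "1 / \<bar>z 0\<bar>"]])
      fix k show "\<bar>e0 k\<bar> \<le> \<bar>1 / \<bar>z 0\<bar> * z k\<bar>"
        using z0 by (auto simp: e0_def)
    qed
    define h where "h = cesaro e0"
    have hX: "h \<in> X" using M e0X unfolding h_def by blast
    have hval: "h k = 1 / real (Suc k)" for k
      unfolding h_def cesaro_def e0_def by simp
    have hpos: "h k \<ge> 0" for k unfolding hval by simp
    have M0: "M \<ge> 0"
    proof (rule ccontr)
      assume "\<not> M \<ge> 0"
      moreover have "N e0 > 0"
      proof -
        have "e0 \<noteq> (\<lambda>_. 0)" by (auto simp: e0_def fun_eq_iff)
        then show ?thesis using B e0X unfolding banach_ideal_space_def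
          by (metis order_le_less)
      qed
      ultimately have "M * N e0 < 0" by (simp add: mult_neg_pos)
      moreover have "N h \<le> M * N e0" using M e0X unfolding h_def by blast
      ultimately show False using bis_nonneg[OF B hX] by linarith
    qed
    define hK where "hK K = (\<lambda>k. if K \<le> k then h k else 0)" for K
    have hKX: "hK K \<in> X" for K
      by (rule bis_ideal(1)[OF B hX]) (auto simp: hK_def)
    have hKpos: "N (hK K) \<ge> 0" for K using bis_nonneg[OF B hKX] .
    have sumcut: "(\<Sum>j\<le>k. if j < m then f j else 0) = (\<Sum>j<m. f j)"
      if "m \<le> Suc k" for m k and f :: "nat \<Rightarrow> real"
    proof -
      have "(\<Sum>j\<le>k. if j < m then f j else 0) = sum f ({..k} \<inter> {..<m})"
        using sum.inter_restrict[of "{..k}" f "{..<m}"] by simp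
      also have "{..k} \<inter> {..<m} = {..<m}" using that by auto
      finally show ?thesis .
    qed
    have tail: "harm K * N (hK K) \<le> M * N h" if "K > 0" for K
    proof -
      define g where "g = (\<lambda>k. if k < K then h k else 0)"
      have gX: "g \<in> X" and gN: "N g \<le> N h"
        by (rule bis_ideal[OF B hX], auto simp: g_def)+
      have cgX: "cesaro g \<in> X" and cgN: "N (cesaro g) \<le> M * N g" using M gX by auto
      have "\<bar>harm K * hK K k\<bar> \<le> \<bar>cesaro g k\<bar>" for k
      proof (cases "K \<le> k")
        case True
        have "(\<Sum>j\<le>k. g j) = (\<Sum>j<K. h j)" unfolding g_def
          by (rule sumcut) (use True in auto)
        also have "\<dots> = harm K" unfolding hval harm_altdef by (simp add: divide_inverse)
        finally show ?thesis using True
          by (simp add: hK_def cesaro_def hval harm_nonneg)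
      next
        case False
        then show ?thesis by (simp add: hK_def)
      qed
      then have "N (\<lambda>k. harm K * hK K k) \<le> N (cesaro g)"
        by (rule bis_ideal(2)[OF B cgX])
      moreover have "N (\<lambda>k. harm K * hK K k) = harm K * N (hK K)"
        using bis_scale(2)[OF B hKX] by (simp add: harm_nonneg)
      moreover have "M * N g \<le> M * N h" using gN M0 by (rule mult_left_mono)
      ultimately show ?thesis using cgN by linarith
    qed
    have hK_lim: "(\<lambda>K. N (hK K)) \<longlonglongrightarrow> 0"
    proof (rule tendsto_sandwich[of "\<lambda>_. 0" _ _ "\<lambda>K. M * N h / harm K"])
      show "\<forall>\<^sub>F K in sequentially. 0 \<le> N (hK K)" using hKpos by simp
      show "\<forall>\<^sub>F K in sequentially. N (hK K) \<le> M * N h / harm K"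
        using eventually_gt_at_top[of "0::nat"]
      proof eventually_elim
        case (elim K)
        then have "harm K > (0::real)" by simp
        then show ?case using tail[OF elim] by (simp add: field_simps mult.commute)
      qed
      show "(\<lambda>K. M * N h / harm K) \<longlonglongrightarrow> 0"
        by (rule tendsto_divide_0[OF tendsto_const filterlim_at_top_imp_at_infinity[OF harm_at_top]])
    qed simp
    define t where "t m = (\<lambda>k. if m \<le> k then \<bar>x k\<bar> else 0)" for m
    define T where "T m = cesaro (t m)" for m
    have T_lim: "(\<lambda>m. N (T m)) \<longlonglongrightarrow> 0"
    proof -
      have t1: "0 \<le> t n k \<and> t n k \<le> \<bar>x k\<bar>" for n k by (auto simp: t_def)
      have t2: "antimono (\<lambda>n. t n k)" for k by (rule antimonoI) (auto simp: t_def)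
      have t3: "(\<lambda>n. t n k) \<longlonglongrightarrow> 0" for k
      proof -
        have "\<forall>\<^sub>F n in sequentially. t n k = 0"
          using eventually_gt_at_top[of k] by eventually_elim (auto simp: t_def)
        then show ?thesis by (rule tendsto_eventually)
      qed
      have "(\<lambda>m. ces_norm N (t m)) \<longlonglongrightarrow> 0"
        using ocx[of t] t1 t2 t3 by blast
      moreover have "absseq (t m) = t m" for m by (rule absseq_nonneg) (auto simp: t_def)
      ultimately show ?thesis unfolding ces_norm_def T_def by simp
    qed
    have Tpos: "T m k \<ge> 0" for m k unfolding T_def by (rule cesaro_nonneg) (auto simp: t_def)
    have TX: "T m \<in> X" for m
    proof (rule bis_ideal(1)[OF B xX])
      fix k show "\<bar>T m k\<bar> \<le> \<bar>cesaro y k\<bar>"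
        unfolding T_def cesaro_def y_def absseq_def t_def
        by (simp add: sum_nonneg divide_right_mono sum_mono)
    qed
    define S where "S m = (\<Sum>j<m. \<bar>x j\<bar>)" for m
    have Spos: "S m \<ge> 0" for m unfolding S_def by (simp add: sum_nonneg)
    have ysplit: "cesaro y k = S m * h k + T m k" if "m \<le> Suc k" for m k
    proof -
      have "(\<Sum>j\<le>k. \<bar>x j\<bar>) = (\<Sum>j\<le>k. (if j < m then \<bar>x j\<bar> else 0) + t m j)"
        by (rule sum.cong) (auto simp: t_def)
      also have "\<dots> = S m + (\<Sum>j\<le>k. t m j)"
        unfolding sum.distrib S_def using sumcut[OF that] by simp
      finally show ?thesis
        unfolding cesaro_def y_def absseq_def T_def hval by (simp add: add_divide_distrib)
    qed
    have "cesaro y \<in> ord_cont X N"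
      unfolding ord_cont_def
    proof (intro CollectI conjI allI impI)
      show "cesaro y \<in> X" by (rule xX)
      fix v :: "nat \<Rightarrow> nat \<Rightarrow> real"
      assume v1: "\<forall>n k. 0 \<le> v n k \<and> v n k \<le> \<bar>cesaro y k\<bar>"
        and v2: "\<forall>k. antimono (\<lambda>n. v n k) \<and> (\<lambda>n. v n k) \<longlonglongrightarrow> 0"
      have vX: "v n \<in> X" for n by (rule bis_ideal(1)[OF B xX]) (use v1 in auto)
      have vpos: "N (v n) \<ge> 0" for n by (rule bis_nonneg[OF B vX])
      have key: "N (v n) \<le> (\<Sum>j<K. v n j) * real K * N h + S m * N (hK K) + N (T m)"
        if "m \<le> K" for n m K
      proof -
        define c where "c = (\<Sum>j<K. v n j) * real K"
        have cpos: "c \<ge> 0" unfolding c_def using v1 by (simp add: sum_nonneg)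
        define w where "w = (\<lambda>k. c * h k + (S m * hK K k + T m k))"
        have w2X: "(\<lambda>k. S m * hK K k + T m k) \<in> X"
          by (rule bis_add(1)[OF B bis_scale(1)[OF B hKX] TX])
        have wX: "w \<in> X" unfolding w_def
          by (rule bis_add(1)[OF B bis_scale(1)[OF B hX] w2X])
        have "\<bar>v n k\<bar> \<le> \<bar>w k\<bar>" for k
        proof -
          have w0: "0 \<le> c * h k" "0 \<le> S m * hK K k" "0 \<le> T m k"
            using cpos hpos Spos Tpos by (auto simp: hK_def)
          have "v n k \<le> w k"
          proof (cases "k < K")
            case True
            have "v n k \<le> (\<Sum>j<K. v n j)"
              by (rule member_le_sum) (use True v1 in auto)
            also have "\<dots> \<le> c * h k"
            proof -
              have "1 \<le> real K * h k" using True by (simp add: hval)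
              then have "(\<Sum>j<K. v n j) * 1 \<le> (\<Sum>j<K. v n j) * (real K * h k)"
                by (rule mult_left_mono) (use v1 in \<open>simp add: sum_nonneg\<close>)
              then show ?thesis unfolding c_def by (simp add: mult.assoc)
            qed
            finally show ?thesis using w0 unfolding w_def by linarith
          next
            case False
            then have "m \<le> Suc k" using that by simp
            have "v n k \<le> cesaro y k" using v1 xX
              by (metis abs_of_nonneg cesaro_nonneg y_def absseq_def abs_ge_zero)
            also have "\<dots> = S m * hK K k + T m k"
              using ysplit[OF \<open>m \<le> Suc k\<close>] False by (simp add: hK_def)
            finally show ?thesis using w0 unfolding w_def by linarith
          qed
          then show ?thesis using v1 w0 unfolding w_def by simp
        qed
        then have "N (v n) \<le> N w" by (rule bis_ideal(2)[OF B wX])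
        also have "\<dots> \<le> N (\<lambda>k. c * h k) + N (\<lambda>k. S m * hK K k + T m k)"
          unfolding w_def by (rule bis_add(2)[OF B bis_scale(1)[OF B hX] w2X])
        also have "\<dots> \<le> c * N h + (S m * N (hK K) + N (T m))"
          using bis_scale(2)[OF B hX, of c] bis_scale(2)[OF B hKX, of "S m" K]
            bis_add(2)[OF B bis_scale(1)[OF B hKX] TX, of "S m" K m] cpos Spos
          by simp
        finally show ?thesis unfolding c_def by simp
      qed
      show "(\<lambda>n. N (v n)) \<longlonglongrightarrow> 0"
      proof (rule LIMSEQ_I)
        fix r :: real assume r: "r > 0"
        have "\<forall>\<^sub>F m in sequentially. N (T m) < r / 3"
          using order_tendstoD(2)[OF T_lim, of "r/3"] r by simp
        then obtain m0 where "\<forall>m\<ge>m0. N (T m) < r / 3"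
          unfolding eventually_sequentially by blast
        then have m: "N (T m0) < r / 3" by blast
        have "(\<lambda>K. S m0 * N (hK K)) \<longlonglongrightarrow> 0"
          using tendsto_mult[OF tendsto_const hK_lim, of "S m0"] by simp
        then have e1: "\<forall>\<^sub>F K in sequentially. S m0 * N (hK K) < r / 3"
          using order_tendstoD(2)[of _ 0 sequentially "r/3"] r by simp
        have "\<forall>\<^sub>F K in sequentially. S m0 * N (hK K) < r / 3 \<and> m0 \<le> K"
          by (rule eventually_conj[OF e1 eventually_ge_at_top])
        then obtain K0 where "\<forall>K\<ge>K0. S m0 * N (hK K) < r / 3 \<and> m0 \<le> K"
          unfolding eventually_sequentially by blast
        then have K: "S m0 * N (hK K0) < r / 3" "m0 \<le> K0" by auto
        have "(\<lambda>n. (\<Sum>j<K0. v n j) * real K0 * N h) \<longlonglongrightarrow> (\<Sum>j<K0. 0) * real K0 * N h"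
          by (intro tendsto_mult tendsto_const tendsto_sum) (use v2 in auto)
        then have "(\<lambda>n. (\<Sum>j<K0. v n j) * real K0 * N h) \<longlonglongrightarrow> 0" by simp
        then have "\<forall>\<^sub>F n in sequentially. (\<Sum>j<K0. v n j) * real K0 * N h < r / 3"
          using order_tendstoD(2)[of _ 0 sequentially "r/3"] r by simp
        then obtain n0 where n0: "\<forall>n\<ge>n0. (\<Sum>j<K0. v n j) * real K0 * N h < r / 3"
          unfolding eventually_sequentially by blast
        show "\<exists>no. \<forall>n\<ge>no. norm (N (v n) - 0) < r"
        proof (intro exI allI impI)
          fix n assume "n \<ge> n0"
          then show "norm (N (v n) - 0) < r"
          proof -
            have "N (v n) \<le> (\<Sum>j<K0. v n j) * real K0 * N h + S m0 * N (hK K0) + N (T m0)"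
              by (rule key[OF K(2)])
            moreover have "(\<Sum>j<K0. v n j) * real K0 * N h < r / 3" using n0 \<open>n \<ge> n0\<close> by blast
            ultimately show ?thesis using K(1) m vpos[of n] by simp
          qed
        qed
      qed
    qed
    then show "x \<in> {x. cesaro (absseq x) \<in> ord_cont X N}" by (simp add: y_def)
  qed
qed

end
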